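(* Let $\Omega\subset\mathbb{R}^d$ be a domain and let $u\in\mathcal{S}^F(\Omega)$. Then $$L_u(u)\ge(2-\gamma)u^{\gamma-1}\quad\text{in }\{u>0\}\cap\Omega,\qquad\text{and}\qquad \Delta u\le u^{\gamma-1}\quad\text{in }\Omega.$$
   Context: Fix $d\ge1$, $\Lambda\ge1$, $\gamma\in(1,2)$. $\mathcal{S}_d$ is the space of real symmetric $d\times d$ matrices. Standing assumptions on $F:\mathcal{S}_d\to\mathbb{R}$: (i) uniform ellipticity: $\frac1\Lambda\|P\|\le F(M+P)-F(M)\le\Lambda\|P\|$ for all $M,P\in\mathcal{S}_d$, $P\ge0$; (ii) $F$ is convex, $F(0)=0$, and the trace map $M\mapsto \mathrm{trace}(M)$ is a sub-differential of $F$ at $0$; (iii) either $F$ is (Gâteaux) differentiable at $0$, or $F(\lambda M)=\lambda F(M)$ for all $\lambda>0$, $M\in\mathcal{S}_d$. A sub-differential of $F$ at $A\in\mathcal{S}_d$ is a linear map $S_A:\mathcal{S}_d\to\mathbb{R}$ with $S_A(M)\le F(A+M)-F(A)$ for all $M\in\mathcal{S}_d$. $\mathcal{S}^F(\Omega)$ is the class of continuous (viscosity, hence classical) solutions of $F(D^2u)=u^{\gamma-1}$, $u\ge0$ in $\Omega$. The linearized operator is $L_u(w)=S_{D^2u}(D^2w)-(\gamma-1)u^{\gamma-2}w$ in $\{u>0\}\cap\Omega$, where at each point $x$, $S_{D^2u}=S_{D^2u(x)}$ is a sub-differential of $F$ at $D^2u(x)$. *)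

theory Defs
  imports "HOL-Analysis.Analysis"
begin

definition sym_mat :: "real^'n^'n \<Rightarrow> bool" where
  "sym_mat M \<longleftrightarrow> transpose M = M"

definition psd :: "real^'n^'n \<Rightarrow> bool" where
  "psd P \<longleftrightarrow> (\<forall>x. 0 \<le> x \<bullet> (P *v x))"

definition mat_norm :: "real^'n^'n \<Rightarrow> real" where
  "mat_norm P = onorm (\<lambda>x. P *v x)"

definition subdiff :: "(real^'n^'n \<Rightarrow> real) \<Rightarrow> real^'n^'n \<Rightarrow> (real^'n^'n \<Rightarrow> real) \<Rightarrow> bool" where
  "subdiff F A S \<longleftrightarrow> linear S \<and> (\<forall>M. sym_mat M \<longrightarrow> S M \<le> F (A + M) - F A)"

definition standing_F :: "real \<Rightarrow> (real^'n^'n \<Rightarrow> real) \<Rightarrow> bool" where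
  "standing_F Lam F \<longleftrightarrow>
     (\<forall>M P. sym_mat M \<and> sym_mat P \<and> psd P \<longrightarrow>
        mat_norm P / Lam \<le> F (M + P) - F M \<and> F (M + P) - F M \<le> Lam * mat_norm P)
   \<and> convex_on {M. sym_mat M} F
   \<and> F 0 = 0
   \<and> subdiff F 0 trace
   \<and> ((\<exists>L. linear L \<and> (\<forall>M. sym_mat M \<longrightarrow>
            ((\<lambda>t. (F (t *\<^sub>R M) - F 0) / t) \<longlongrightarrow> L M) (at 0)))
      \<or> (\<forall>lam M. lam > 0 \<and> sym_mat M \<longrightarrow> F (lam *\<^sub>R M) = lam * F M))"

text \<open>u in S^F(Omega): a nonnegative classical (C^2) solution of F(D^2 u) = u^(gamma-1),
  with gradient Du and Hessian D2u.\<close>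
definition in_SF :: "(real^'n^'n \<Rightarrow> real) \<Rightarrow> real \<Rightarrow> (real^'n) set \<Rightarrow>
    (real^'n \<Rightarrow> real) \<Rightarrow> (real^'n \<Rightarrow> real^'n) \<Rightarrow> (real^'n \<Rightarrow> real^'n^'n) \<Rightarrow> bool" where
  "in_SF F \<gamma> \<Omega> u Du D2u \<longleftrightarrow>
     continuous_on \<Omega> u \<and> continuous_on \<Omega> D2u
   \<and> (\<forall>x\<in>\<Omega>. (u has_derivative (\<lambda>h. Du x \<bullet> h)) (at x))
   \<and> (\<forall>x\<in>\<Omega>. (Du has_derivative (\<lambda>h. D2u x *v h)) (at x))
   \<and> (\<forall>x\<in>\<Omega>. 0 \<le> u x \<and> F (D2u x) = u x powr (\<gamma> - 1))"

end

theory Submission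
  imports Defs
begin

lemma mixed:
  fixes u :: "real^'n \<Rightarrow> real" and Du :: "real^'n \<Rightarrow> real^'n" and D2u :: "real^'n \<Rightarrow> real^'n^'n"
  assumes du: "\<forall>y\<in>\<Omega>. (u has_derivative (\<lambda>h. Du y \<bullet> h)) (at y)"
    and d2u: "\<forall>y\<in>\<Omega>. (Du has_derivative (\<lambda>h. D2u y *v h)) (at y)"
    and t: "t > 0" and inO: "\<And>s r. 0 \<le> s \<Longrightarrow> s \<le> t \<Longrightarrow> 0 \<le> r \<Longrightarrow> r \<le> t \<Longrightarrow> x + s *\<^sub>R h + r *\<^sub>R k \<in> \<Omega>"
  shows "\<exists>s r. 0 < s \<and> s < t \<and> 0 < r \<and> r < t \<and>
     u (x + t *\<^sub>R h + t *\<^sub>R k) - u (x + t *\<^sub>R h) - u (x + t *\<^sub>R k) + u x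
       = t * t * ((D2u (x + s *\<^sub>R h + r *\<^sub>R k) *v k) \<bullet> h)"
proof -
  define \<phi> where "\<phi> s = u (x + s *\<^sub>R h + t *\<^sub>R k) - u (x + s *\<^sub>R h + 0 *\<^sub>R k)" for s
  have D1: "DERIV \<phi> s :> (Du (x + s *\<^sub>R h + t *\<^sub>R k) \<bullet> h - Du (x + s *\<^sub>R h + 0 *\<^sub>R k) \<bullet> h)"
    if "0 \<le> s" "s \<le> t" for s
  proof -
    have g: "DERIV (\<lambda>s. u (x + s *\<^sub>R h + r *\<^sub>R k)) s :> (Du (x + s *\<^sub>R h + r *\<^sub>R k) \<bullet> h)"
      if "0 \<le> r" "r \<le> t" for r
    proof -
      have "((\<lambda>s. x + s *\<^sub>R h + r *\<^sub>R k) has_derivative (\<lambda>d. d *\<^sub>R h)) (at s)"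
        by (auto intro!: derivative_eq_intros)
      moreover have "(u has_derivative (\<lambda>v. Du (x + s *\<^sub>R h + r *\<^sub>R k) \<bullet> v)) (at (x + s *\<^sub>R h + r *\<^sub>R k))"
        using du inO[OF \<open>0 \<le> s\<close> \<open>s \<le> t\<close> that] by blast
      ultimately have "((\<lambda>s. u (x + s *\<^sub>R h + r *\<^sub>R k)) has_derivative (\<lambda>d. Du (x + s *\<^sub>R h + r *\<^sub>R k) \<bullet> (d *\<^sub>R h))) (at s)"
        using diff_chain_at[where g=u] unfolding o_def by blast
      then show ?thesis
        by (simp add: has_field_derivative_def mult.commute[of _ "Du _ \<bullet> h"])
    qed
    show ?thesis unfolding \<phi>_def using g[of t] g[of 0] t by (auto intro!: derivative_eq_intros)
  qed
  obtain s where s: "0 < s" "s < t" and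
    eq1: "\<phi> t - \<phi> 0 = (t - 0) * (Du (x + s *\<^sub>R h + t *\<^sub>R k) \<bullet> h - Du (x + s *\<^sub>R h + 0 *\<^sub>R k) \<bullet> h)"
    using MVT2[OF t D1] by blast
  define \<psi> where "\<psi> r = Du (x + s *\<^sub>R h + r *\<^sub>R k) \<bullet> h" for r
  have D2: "DERIV \<psi> r :> ((D2u (x + s *\<^sub>R h + r *\<^sub>R k) *v k) \<bullet> h)" if "0 \<le> r" "r \<le> t" for r
  proof -
    have "((\<lambda>r. x + s *\<^sub>R h + r *\<^sub>R k) has_derivative (\<lambda>d. d *\<^sub>R k)) (at r)"
      by (auto intro!: derivative_eq_intros)
    moreover have "(Du has_derivative (\<lambda>v. D2u (x + s *\<^sub>R h + r *\<^sub>R k) *v v)) (at (x + s *\<^sub>R h + r *\<^sub>R k))"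
      using d2u inO[of s r] s that by auto
    ultimately have "((\<lambda>r. Du (x + s *\<^sub>R h + r *\<^sub>R k)) has_derivative (\<lambda>d. D2u (x + s *\<^sub>R h + r *\<^sub>R k) *v (d *\<^sub>R k))) (at r)"
      using diff_chain_at[where g=Du] unfolding o_def by blast
    then have "((\<lambda>r. Du (x + s *\<^sub>R h + r *\<^sub>R k) \<bullet> h) has_derivative (\<lambda>d. (D2u (x + s *\<^sub>R h + r *\<^sub>R k) *v (d *\<^sub>R k)) \<bullet> h)) (at r)"
      by (auto intro!: derivative_eq_intros)
    then show ?thesis unfolding \<psi>_def
      by (simp add: has_field_derivative_def matrix_vector_mult_scaleR mult.commute[of _ "(D2u _ *v k) \<bullet> h"])
  qed
  obtain r where r: "0 < r" "r < t" and
    eq2: "\<psi> t - \<psi> 0 = (t - 0) * ((D2u (x + s *\<^sub>R h + r *\<^sub>R k) *v k) \<bullet> h)"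
    using MVT2[OF t D2] by blast
  show ?thesis
    apply (rule exI[of _ s], rule exI[of _ r])
    using s r eq1 eq2 unfolding \<phi>_def \<psi>_def by (simp add: algebra_simps)
qed

lemma hess_sym:
  fixes u :: "real^'n \<Rightarrow> real" and Du :: "real^'n \<Rightarrow> real^'n" and D2u :: "real^'n \<Rightarrow> real^'n^'n"
  assumes O: "open \<Omega>" and x: "x \<in> \<Omega>" and cont: "continuous_on \<Omega> D2u"
    and du: "\<forall>y\<in>\<Omega>. (u has_derivative (\<lambda>h. Du y \<bullet> h)) (at y)"
    and d2u: "\<forall>y\<in>\<Omega>. (Du has_derivative (\<lambda>h. D2u y *v h)) (at y)"
  shows "D2u x $ i $ j = D2u x $ j $ i"
proof (rule ccontr)
  assume ne: "D2u x $ i $ j \<noteq> D2u x $ j $ i"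
  define e where "e = \<bar>D2u x $ i $ j - D2u x $ j $ i\<bar> / 2"
  have e: "e > 0" using ne unfolding e_def by auto
  have "isCont D2u x" using cont O x continuous_on_eq_continuous_at by blast
  then obtain d where d: "d > 0" and dd: "\<And>y. dist y x < d \<Longrightarrow> dist (D2u y) (D2u x) < e"
    using e unfolding continuous_at_eps_delta by blast
  obtain d2 where d2: "d2 > 0" and b: "ball x d2 \<subseteq> \<Omega>" using O x open_contains_ball by blast
  define t where "t = min d d2 / 4"
  have t: "t > 0" using d d2 unfolding t_def by auto
  have near: "dist (x + s *\<^sub>R h + r *\<^sub>R k) x < min d d2"
    if "0 \<le> s" "s \<le> t" "0 \<le> r" "r \<le> t" and hk: "norm h = 1" "norm k = 1" for s r and h k :: "real^'n"
  proof -
    have "dist (x + s *\<^sub>R h + r *\<^sub>R k) x = norm (s *\<^sub>R h + r *\<^sub>R k)" by (simp add: dist_norm)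
    also have "\<dots> \<le> norm (s *\<^sub>R h) + norm (r *\<^sub>R k)" by (rule norm_triangle_ineq)
    also have "\<dots> = s + r" using that by simp
    also have "\<dots> < min d d2" using that t unfolding t_def by linarith
    finally show ?thesis .
  qed
  have inO: "x + s *\<^sub>R h + r *\<^sub>R k \<in> \<Omega>"
    if "0 \<le> s" "s \<le> t" "0 \<le> r" "r \<le> t" and hk: "norm h = 1" "norm k = 1" for s r and h k :: "real^'n"
    using near[OF that] b by (auto simp: dist_commute)
  have n1: "norm (axis i (1::real)) = 1" "norm (axis j (1::real)) = 1" by (simp_all add: norm_axis_1)
  obtain s1 r1 where sr1: "0 < s1" "s1 < t" "0 < r1" "r1 < t" and
    E1: "u (x + t *\<^sub>R axis i 1 + t *\<^sub>R axis j 1) - u (x + t *\<^sub>R axis i 1) - u (x + t *\<^sub>R axis j 1) + u x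
       = t * t * ((D2u (x + s1 *\<^sub>R axis i 1 + r1 *\<^sub>R axis j 1) *v axis j 1) \<bullet> axis i 1)"
    using mixed[OF du d2u t, of x "axis i 1" "axis j 1"] inO n1 by blast
  obtain s2 r2 where sr2: "0 < s2" "s2 < t" "0 < r2" "r2 < t" and
    E2: "u (x + t *\<^sub>R axis j 1 + t *\<^sub>R axis i 1) - u (x + t *\<^sub>R axis j 1) - u (x + t *\<^sub>R axis i 1) + u x
       = t * t * ((D2u (x + s2 *\<^sub>R axis j 1 + r2 *\<^sub>R axis i 1) *v axis i 1) \<bullet> axis j 1)"
    using mixed[OF du d2u t, of x "axis j 1" "axis i 1"] inO n1 by blast
  define y1 where "y1 = x + s1 *\<^sub>R axis i 1 + r1 *\<^sub>R axis j 1"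
  define y2 where "y2 = x + s2 *\<^sub>R axis j 1 + r2 *\<^sub>R axis i 1"
  have "t * t * (D2u y1 $ i $ j) = t * t * (D2u y2 $ j $ i)"
    using E1 E2 unfolding y1_def y2_def
    by (simp add: matrix_vector_mult_basis inner_axis column_def algebra_simps)
  then have eq: "D2u y1 $ i $ j = D2u y2 $ j $ i" using t by simp
  have "dist y1 x < d" using near[of s1 r1 "axis i 1" "axis j 1"] sr1 n1 unfolding y1_def by auto
  then have c1: "dist (D2u y1) (D2u x) < e" by (rule dd)
  have "dist y2 x < d" using near[of s2 r2 "axis j 1" "axis i 1"] sr2 n1 unfolding y2_def by auto
  then have c2: "dist (D2u y2) (D2u x) < e" by (rule dd)
  have comp: "\<bar>M $ a $ b - N $ a $ b\<bar> \<le> dist M N" for M N :: "real^'n^'n" and a b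
  proof -
    have "\<bar>M $ a $ b - N $ a $ b\<bar> = \<bar>(M - N) $ a $ b\<bar>" by simp
    also have "\<dots> \<le> norm ((M - N) $ a)" by (rule component_le_norm_cart)
    also have "\<dots> \<le> norm (M - N)" by (rule Finite_Cartesian_Product.norm_nth_le)
    finally show ?thesis by (simp add: dist_norm)
  qed
  have "\<bar>D2u y1 $ i $ j - D2u x $ i $ j\<bar> < e" using comp[of "D2u y1" i j "D2u x"] c1 by linarith
  moreover have "\<bar>D2u y2 $ j $ i - D2u x $ j $ i\<bar> < e" using comp[of "D2u y2" j i "D2u x"] c2 by linarith
  ultimately show False using eq unfolding e_def by (simp add: abs_if split: if_splits)
qed

theorem proposition2p8:
  fixes F :: "real^'n^'n \<Rightarrow> real" and \<Lambda> \<gamma> :: real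
    and \<Omega> :: "(real^'n) set"
    and u :: "real^'n \<Rightarrow> real" and Du :: "real^'n \<Rightarrow> real^'n" and D2u :: "real^'n \<Rightarrow> real^'n^'n"
  assumes "\<Lambda> \<ge> 1" and "1 < \<gamma>" and "\<gamma> < 2"
    and "standing_F \<Lambda> F"
    and "open \<Omega>" and "connected \<Omega>"
    and "in_SF F \<gamma> \<Omega> u Du D2u"
  shows "(\<forall>x\<in>\<Omega>. u x > 0 \<longrightarrow> (\<forall>S. subdiff F (D2u x) S \<longrightarrow>
            S (D2u x) - (\<gamma> - 1) * u x powr (\<gamma> - 2) * u x \<ge> (2 - \<gamma>) * u x powr (\<gamma> - 1)))
       \<and> (\<forall>x\<in>\<Omega>. trace (D2u x) \<le> u x powr (\<gamma> - 1))"
proof -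
  have ell: "standing_F \<Lambda> F" by fact
  have sdt: "subdiff F 0 trace" and F0: "F 0 = 0" using ell unfolding standing_F_def by auto
  have SF: "continuous_on \<Omega> D2u" "\<forall>x\<in>\<Omega>. (u has_derivative (\<lambda>h. Du x \<bullet> h)) (at x)"
    "\<forall>x\<in>\<Omega>. (Du has_derivative (\<lambda>h. D2u x *v h)) (at x)"
    "\<forall>x\<in>\<Omega>. 0 \<le> u x \<and> F (D2u x) = u x powr (\<gamma> - 1)"
    using assms(7) unfolding in_SF_def by auto
  have sym: "sym_mat (D2u x)" if "x \<in> \<Omega>" for x
    unfolding sym_mat_def transpose_def
    using hess_sym[OF assms(5) that SF(1) SF(2) SF(3)] by (simp add: vec_eq_iff)
  have symn: "sym_mat (- D2u x)" if "x \<in> \<Omega>" for x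
    using sym[OF that] unfolding sym_mat_def transpose_def by (simp add: vec_eq_iff)
  show ?thesis
  proof (intro conjI ballI impI allI)
    fix x assume x: "x \<in> \<Omega>"
    have "trace (D2u x) \<le> F (0 + D2u x) - F 0" using sdt sym[OF x] unfolding subdiff_def by blast
    then show "trace (D2u x) \<le> u x powr (\<gamma> - 1)" using F0 SF(4) x by simp
  next
    fix x S assume x: "x \<in> \<Omega>" and pos: "u x > 0" and S: "subdiff F (D2u x) S"
    have lin: "linear S" using S unfolding subdiff_def by blast
    have "S (- D2u x) \<le> F (D2u x + - D2u x) - F (D2u x)" using S symn[OF x] unfolding subdiff_def by blast
    then have "S (D2u x) \<ge> F (D2u x)" using F0 linear_neg[OF lin, of "D2u x"] by simp
    then have S1: "S (D2u x) \<ge> u x powr (\<gamma> - 1)" using SF(4) x by simp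
    have pa: "u x powr (\<gamma> - 2 + 1) = u x powr (\<gamma> - 2) * u x powr 1" by (rule powr_add)
    have "u x powr (\<gamma> - 2) * u x = u x powr (\<gamma> - 2 + 1)" using pos by (simp only: pa powr_one[OF less_imp_le[OF pos]])
    also have "\<dots> = u x powr (\<gamma> - 1)" by simp
    finally have "u x powr (\<gamma> - 2) * u x = u x powr (\<gamma> - 1)" .
    then have "(\<gamma> - 1) * u x powr (\<gamma> - 2) * u x = (\<gamma> - 1) * u x powr (\<gamma> - 1)" by (simp add: mult.assoc)
    then show "S (D2u x) - (\<gamma> - 1) * u x powr (\<gamma> - 2) * u x \<ge> (2 - \<gamma>) * u x powr (\<gamma> - 1)"
      using S1 by (simp add: algebra_simps)
  qed
qed

end
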